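(* Let $m>0$, let $f(r,z)$ be a smooth function on $[\tfrac m2,\infty)\times[-1,1]$, $J,c$ constants, and $\omega=f(1-z^2)^2+J(z^3-3z)+c$ with $z=\cos\theta$. Set $K_{\varphi\theta}=\omega_{,r}/\sin\theta$, $K_{\varphi r}=-\omega_{,\theta}/(r^2\sin\theta)$, and $$P_J=2\int_{m/2}^\infty dr\,\varrho(r)\,r\int_{-1}^1\big(K_{\varphi\theta}^2+r^2K_{\varphi r}^2\big)\frac{dz}{1-z^2},\qquad \varrho(r)=\frac{m(1-\frac m{2r})}{4r^3(1+\frac m{2r})^7}.$$ Then for each $r$, $\int_{-1}^1\frac{\omega_{,z}^2}{1-z^2}dz=\int_{-1}^1\frac{\tilde\omega_{,z}^2}{1-z^2}dz+12J^2$ where $\tilde\omega=f(1-z^2)^2$, and consequently $$P_J\ge\frac{J^2}{4m^2},$$ with equality if and only if $f\equiv0$. *)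

theory Defs
  imports "HOL-Analysis.Analysis"
begin

fun Ck_on2 :: "nat \<Rightarrow> (real \<times> real) set \<Rightarrow> (real \<times> real \<Rightarrow> real) \<Rightarrow> bool" where
  "Ck_on2 0 S g \<longleftrightarrow> continuous_on S g"
| "Ck_on2 (Suc k) S g \<longleftrightarrow>
     (\<exists>D1 D2. (\<forall>x\<in>S. (g has_derivative (\<lambda>h. fst h * D1 x + snd h * D2 x)) (at x within S))
            \<and> Ck_on2 k S D1 \<and> Ck_on2 k S D2)"

definition smooth_on2 :: "(real \<times> real) set \<Rightarrow> (real \<times> real \<Rightarrow> real) \<Rightarrow> bool" where
  "smooth_on2 S g \<longleftrightarrow> (\<forall>k. Ck_on2 k S g)"

definition omega :: "(real \<Rightarrow> real \<Rightarrow> real) \<Rightarrow> real \<Rightarrow> real \<Rightarrow> real \<Rightarrow> real \<Rightarrow> real" where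
  "omega f J c r z = f r z * (1 - z^2)^2 + J * (z^3 - 3 * z) + c"

definition omega_tilde :: "(real \<Rightarrow> real \<Rightarrow> real) \<Rightarrow> real \<Rightarrow> real \<Rightarrow> real" where
  "omega_tilde f r z = f r z * (1 - z^2)^2"

definition K_phitheta :: "(real \<Rightarrow> real \<Rightarrow> real) \<Rightarrow> real \<Rightarrow> real \<Rightarrow> real \<Rightarrow> real \<Rightarrow> real" where
  "K_phitheta f J c r \<theta> = deriv (\<lambda>s. omega f J c s (cos \<theta>)) r / sin \<theta>"

definition K_phir :: "(real \<Rightarrow> real \<Rightarrow> real) \<Rightarrow> real \<Rightarrow> real \<Rightarrow> real \<Rightarrow> real \<Rightarrow> real" where
  "K_phir f J c r \<theta> = - deriv (\<lambda>t. omega f J c r (cos t)) \<theta> / (r^2 * sin \<theta>)"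

definition rho :: "real \<Rightarrow> real \<Rightarrow> real" where
  "rho m r = m * (1 - m / (2 * r)) / (4 * r^3 * (1 + m / (2 * r))^7)"

definition PJ :: "real \<Rightarrow> (real \<Rightarrow> real \<Rightarrow> real) \<Rightarrow> real \<Rightarrow> real \<Rightarrow> ennreal" where
  "PJ m f J c =
     (\<integral>\<^sup>+ r \<in> {m/2..}. ennreal (2 * rho m r * r) *
        (\<integral>\<^sup>+ z \<in> {-1..1}.
           ennreal (((K_phitheta f J c r (arccos z))^2 + r^2 * (K_phir f J c r (arccos z))^2)
                    / (1 - z^2)) \<partial>lborel) \<partial>lborel)"

end

theory Submission
  imports Defs "HOL-Real_Asymp.Real_Asymp"
begin


lemma dF: assumes "r > 0" "m > 0" shows "((\<lambda>r::real. -128 * J^2 * m * (r^3/(2*r+m)^6)) has_real_derivative 384*J^2*m*r^2*(2*r-m)/(2*r+m)^7) (at r)"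
proof -
  have W: "2*r+m > 0" using assms by simp
  have e: "((3*r^2*W^6 - r^3*(6*(2*W^5)))/(W^6*W^6)) = 3*r^2*(W - 4*r)/W^7" if "W > 0" for W
  proof -
    have "(3*r^2*W^6 - r^3*(6*(2*W^5))) = W^5 * (3*r^2*(W - 4*r))" by (simp add: algebra_simps eval_nat_numeral)
    moreover have "W^6*W^6 = W^5 * W^7" by (simp add: power_add[symmetric])
    ultimately have "((3*r^2*W^6 - r^3*(6*(2*W^5)))/(W^6*W^6)) = W^5 * (3*r^2*(W - 4*r)) / (W^5 * W^7)"
      by (simp only:)
    also have "\<dots> = 3*r^2*(W - 4*r)/W^7" using that by (intro nonzero_mult_divide_mult_cancel_left) simp
    finally show ?thesis .
  qed
  have "((\<lambda>r::real. -128 * J^2 * m * (r^3/(2*r+m)^6)) has_real_derivative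
     (-128 * J^2 * m) * ((3*r^2*(2*r+m)^6 - r^3*(6*(2*(2*r+m)^5)))/((2*r+m)^6*(2*r+m)^6))) (at r)"
    apply (rule derivative_eq_intros refl | use W in simp)+
    done
  then show ?thesis unfolding e[OF W] by (simp add: algebra_simps)
qed
lemma rho_eq: assumes "r > 0" "m > 0" shows "rho m r = 16*m*r^3*(2*r-m)/(2*r+m)^7"
proof -
  have a: "1 + m/(2*r) = (2*r+m)/(2*r)" "1 - m/(2*r) = (2*r-m)/(2*r)" using assms by (auto simp: field_simps)
  have g: "W > 0 \<Longrightarrow> m * (a/(2*r)) / (4*r^3 * (W/(2*r)^7)) = 16*m*r^3*a/W" for W a
    using assms by (simp add: field_simps power_mult_distrib eval_nat_numeral)
  have "(2*r+m)^7 > 0" using assms by simp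
  then show ?thesis unfolding rho_def a power_divide by (rule g)
qed

lemma rho_nonneg: assumes "r \<ge> m/2" "m > 0" shows "rho m r \<ge> 0"
proof -
  have "r > 0" using assms by simp
  then show ?thesis using assms by (simp add: rho_eq)
qed

lemma ftc: assumes "m > 0"
  shows "(\<integral>\<^sup>+ r. ennreal (24*J^2*rho m r / r) * indicator {m/2..} r \<partial>lborel) = ennreal (J^2/(4*m^2))"
proof -
  have "(\<integral>\<^sup>+ r. ennreal (24*J^2*rho m r / r) * indicator {m/2..} r \<partial>lborel)
     = ennreal (0 - (\<lambda>r::real. -128 * J^2 * m * (r^3/(2*r+m)^6)) (m/2))"
  proof (rule nn_integral_FTC_atLeast)
    show "(\<lambda>r. 24*J^2*rho m r / r) \<in> borel_measurable borel" unfolding rho_def by measurable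
    fix x :: real assume x: "m/2 \<le> x"
    then have xp: "x > 0" using assms by simp
    have W: "(2*x+m)^7 > 0" using xp assms by simp
    have g: "W > 0 \<Longrightarrow> 24*J^2*(16*m*x^3*a/W)/x = 384*J^2*m*x^2*a/W" for W a
      using xp by (simp add: field_simps eval_nat_numeral)
    show "((\<lambda>r::real. -128 * J^2 * m * (r^3/(2*r+m)^6)) has_real_derivative 24*J^2*rho m x / x) (at x)"
      unfolding rho_eq[OF xp assms] g[OF W] by (rule dF[OF xp assms])
    show "0 \<le> 24*J^2*rho m x / x" using rho_nonneg[OF x assms] xp by simp
  next
    show "((\<lambda>r::real. -128 * J^2 * m * (r^3/(2*r+m)^6)) \<longlongrightarrow> 0) at_top" using assms by real_asymp
  qed
  also have "0 - (\<lambda>r::real. -128 * J^2 * m * (r^3/(2*r+m)^6)) (m/2) = J^2/(4*m^2)"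
    using assms by (simp add: field_simps eval_nat_numeral)
  finally show ?thesis .
qed

definition AA :: "(real \<Rightarrow> real \<Rightarrow> real) \<Rightarrow> (real \<times> real \<Rightarrow> real) \<Rightarrow> real \<Rightarrow> real \<Rightarrow> real" where
  "AA f D2 r z = D2 (r,z) * (1 - z^2) - 4 * z * f r z"

locale pjctx =
  fixes m :: real and f :: "real \<Rightarrow> real \<Rightarrow> real" and D1 D2 :: "real \<times> real \<Rightarrow> real"
  assumes mpos: "m > 0"
  and cf: "continuous_on ({m/2..} \<times> {-1..1}) (\<lambda>(r,z). f r z)"
  and der: "\<forall>x\<in>{m/2..} \<times> {-1..1}. ((\<lambda>(r,z). f r z) has_derivative (\<lambda>h. fst h * D1 x + snd h * D2 x)) (at x within {m/2..} \<times> {-1..1})"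
  and c1: "continuous_on ({m/2..} \<times> {-1..1}) D1"
  and c2: "continuous_on ({m/2..} \<times> {-1..1}) D2"
begin

lemma pz:
  assumes "r \<ge> m/2" "z \<in> {-1..1}"
  shows "((\<lambda>y. f r y) has_real_derivative D2 (r,z)) (at z within {-1..1})"
proof -
  have 1: "((\<lambda>y. (r,y)) has_derivative (\<lambda>h. (0,h))) (at z within {-1..1})"
    by (auto intro!: derivative_eq_intros)
  have 2: "((\<lambda>(r,z). f r z) has_derivative (\<lambda>h. fst h * D1 (r,z) + snd h * D2 (r,z))) (at ((\<lambda>y. (r,y)) z) within (\<lambda>y. (r,y)) ` {-1..1})"
    apply (rule has_derivative_subset[OF der[rule_format]]) using assms by auto
  have "((\<lambda>(r,z). f r z) \<circ> (\<lambda>y. (r,y)) has_derivative ((\<lambda>h. fst h * D1 (r,z) + snd h * D2 (r,z)) \<circ> (\<lambda>h. (0,h)))) (at z within {-1..1})"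
    by (rule diff_chain_within[OF 1 2])
  moreover have "(\<lambda>x. x * D2 (r,z)) = (*) (D2 (r,z))" by (auto simp: fun_eq_iff)
  ultimately show ?thesis unfolding has_field_derivative_def by (simp add: o_def)
qed

lemma pr:
  assumes "r > m/2" "z \<in> {-1..1}"
  shows "((\<lambda>s. f s z) has_real_derivative D1 (r,z)) (at r)"
proof -
  have 1: "((\<lambda>s. (s,z)) has_derivative (\<lambda>h. (h,0))) (at r within {m/2..})"
    by (auto intro!: derivative_eq_intros)
  have 2: "((\<lambda>(r,z). f r z) has_derivative (\<lambda>h. fst h * D1 (r,z) + snd h * D2 (r,z))) (at ((\<lambda>s. (s,z)) r) within (\<lambda>s. (s,z)) ` {m/2..})"
    apply (rule has_derivative_subset[OF der[rule_format]]) using assms by auto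
  have "((\<lambda>(r,z). f r z) \<circ> (\<lambda>s. (s,z)) has_derivative ((\<lambda>h. fst h * D1 (r,z) + snd h * D2 (r,z)) \<circ> (\<lambda>h. (h,0)))) (at r within {m/2..})"
    by (rule diff_chain_within[OF 1 2])
  moreover have "(\<lambda>x. x * D1 (r,z)) = (*) (D1 (r,z))" by (auto simp: fun_eq_iff)
  ultimately have "((\<lambda>s. f s z) has_real_derivative D1 (r,z)) (at r within {m/2..})"
    unfolding has_field_derivative_def by (simp add: o_def)
  moreover have "at r within {m/2..} = at r"
    using assms by (intro at_within_interior) simp
  ultimately show ?thesis by simp
qed

lemma contz:
  assumes "r \<ge> m/2"
  shows "continuous_on {-1..1} (\<lambda>z. f r z)" "continuous_on {-1..1} (\<lambda>z. D1 (r,z))"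
    "continuous_on {-1..1} (\<lambda>z. D2 (r,z))"
proof -
  have i: "continuous_on {-1..1} (\<lambda>z::real. (r,z))" by (intro continuous_intros)
  have s: "(\<lambda>z::real. (r,z)) ` {-1..1} \<subseteq> {m/2..} \<times> {-1..1}" using assms by auto
  show "continuous_on {-1..1} (\<lambda>z. f r z)"
    using continuous_on_compose2[OF cf i s] by simp
  show "continuous_on {-1..1} (\<lambda>z. D1 (r,z))"
    using continuous_on_compose2[OF c1 i s] by simp
  show "continuous_on {-1..1} (\<lambda>z. D2 (r,z))"
    using continuous_on_compose2[OF c2 i s] by simp
qed

lemma contA:
  assumes "r \<ge> m/2"
  shows "continuous_on {-1..1} (\<lambda>z. AA f D2 r z)"
  unfolding AA_def using contz[OF assms] by (intro continuous_intros) auto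

lemma dtw:
  assumes "r \<ge> m/2" "z \<in> {-1..1}"
  shows "((\<lambda>y. omega f J c r y) has_real_derivative (1-z^2)*(AA f D2 r z - 3*J)) (at z within {-1..1})"
    "((\<lambda>y. omega_tilde f r y) has_real_derivative (1-z^2)*(AA f D2 r z)) (at z within {-1..1})"
proof -
  note d = pz[OF assms]
  show "((\<lambda>y. omega f J c r y) has_real_derivative (1-z^2)*(AA f D2 r z - 3*J)) (at z within {-1..1})"
    unfolding omega_def
    apply (rule derivative_eq_intros d refl)+
    apply (simp add: AA_def algebra_simps power2_eq_square)
    done
  show "((\<lambda>y. omega_tilde f r y) has_real_derivative (1-z^2)*(AA f D2 r z)) (at z within {-1..1})"
    unfolding omega_tilde_def
    apply (rule derivative_eq_intros d refl)+
    apply (simp add: AA_def algebra_simps power2_eq_square)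
    done
qed

lemma derivs:
  assumes "r \<ge> m/2" "-1 < z" "z < 1"
  shows "deriv (\<lambda>y. omega f J c r y) z = (1-z^2)*(AA f D2 r z - 3*J)"
    "deriv (\<lambda>y. omega_tilde f r y) z = (1-z^2)*(AA f D2 r z)"
    "((\<lambda>y. omega f J c r y) has_real_derivative (1-z^2)*(AA f D2 r z - 3*J)) (at z)"
proof -
  have zi: "z \<in> {-1..1}" using assms by auto
  have e: "at z within {-1..1} = at z" using assms by (intro at_within_Icc_at) auto
  show "((\<lambda>y. omega f J c r y) has_real_derivative (1-z^2)*(AA f D2 r z - 3*J)) (at z)"
    using dtw(1)[OF assms(1) zi] e by simp
  then show "deriv (\<lambda>y. omega f J c r y) z = (1-z^2)*(AA f D2 r z - 3*J)"
    by (rule DERIV_imp_deriv)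
  show "deriv (\<lambda>y. omega_tilde f r y) z = (1-z^2)*(AA f D2 r z)"
    using dtw(2)[OF assms(1) zi] e by (intro DERIV_imp_deriv) simp
qed

lemma ic1:
  assumes "r \<ge> m/2" "z \<in> {-1..1}"
  shows "(deriv (\<lambda>y. omega f J c r y) z)^2 / (1-z^2) = (AA f D2 r z - 3*J)^2 * (1-z^2)"
    "(deriv (\<lambda>y. omega_tilde f r y) z)^2 / (1-z^2) = (AA f D2 r z)^2 * (1-z^2)"
proof -
  consider "z = -1" | "z = 1" | "-1 < z \<and> z < 1" using assms(2) by force
  then have "(deriv (\<lambda>y. omega f J c r y) z)^2 / (1-z^2) = (AA f D2 r z - 3*J)^2 * (1-z^2)
     \<and> (deriv (\<lambda>y. omega_tilde f r y) z)^2 / (1-z^2) = (AA f D2 r z)^2 * (1-z^2)"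
  proof cases
    case 3
    then have "z^2 < 1" by (simp add: abs_square_less_1 abs_less_iff)
    then have nz: "1 - z^2 \<noteq> 0" by linarith
    have g: "((1-z^2)*B)^2/(1-z^2) = B^2*(1-z^2)" for B
      using nz by (simp add: power2_eq_square field_simps)
    show ?thesis using derivs(1,2)[OF assms(1)] 3 g by auto
  qed auto
  then show "(deriv (\<lambda>y. omega f J c r y) z)^2 / (1-z^2) = (AA f D2 r z - 3*J)^2 * (1-z^2)"
    "(deriv (\<lambda>y. omega_tilde f r y) z)^2 / (1-z^2) = (AA f D2 r z)^2 * (1-z^2)" by auto
qed

definition XX where "XX r = integral {-1..1} (\<lambda>z. (AA f D2 r z)^2 * (1-z^2))"

lemma XX:
  assumes "r \<ge> m/2"
  shows "((\<lambda>z. (AA f D2 r z)^2 * (1-z^2)) has_integral XX r) {-1..1}" "XX r \<ge> 0"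
proof -
  have "continuous_on {-1..1} (\<lambda>z. (AA f D2 r z)^2 * (1-z^2))"
    using contA[OF assms] by (intro continuous_intros)
  then have i: "(\<lambda>z. (AA f D2 r z)^2 * (1-z^2)) integrable_on {-1..1}"
    by (rule integrable_continuous_interval)
  then show "((\<lambda>z. (AA f D2 r z)^2 * (1-z^2)) has_integral XX r) {-1..1}"
    unfolding XX_def by (rule integrable_integral)
  have "z \<in> {-1..1} \<Longrightarrow> 0 \<le> 1 - z^2" for z::real
    by (auto simp: abs_square_le_1)
  then show "XX r \<ge> 0" unfolding XX_def
    by (intro integral_nonneg[OF i]) auto
qed

lemma hi1:
  assumes "r \<ge> m/2"
  shows "((\<lambda>z. (AA f D2 r z - 3*J)^2 * (1-z^2)) has_integral (XX r + 12 * J^2)) {-1..1}"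
proof -
  have i2: "((\<lambda>z. (1-z^2)*(AA f D2 r z)) has_integral (omega_tilde f r 1 - omega_tilde f r (-1))) {-1..1}"
    by (rule fundamental_theorem_of_calculus)
       (auto simp: has_real_derivative_iff_has_vector_derivative[symmetric] intro!: dtw(2)[OF assms])
  have i3: "((\<lambda>z. 9*J^2*(1-z^2)) has_integral ((\<lambda>z. 9*J^2*(z - z^3/3)) 1 - (\<lambda>z. 9*J^2*(z - z^3/3)) (-1))) {-1..1}"
    apply (rule fundamental_theorem_of_calculus)
     apply simp
    apply (simp only: has_real_derivative_iff_has_vector_derivative[symmetric])
    apply (rule derivative_eq_intros refl | simp)+
    done
  have "((\<lambda>z. (AA f D2 r z)^2 * (1-z^2) - (6*J) * ((1-z^2)*(AA f D2 r z)) + 9*J^2*(1-z^2)) has_integral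
       (XX r - (6*J) * (omega_tilde f r 1 - omega_tilde f r (-1)) + ((\<lambda>z. 9*J^2*(z - z^3/3)) 1 - (\<lambda>z. 9*J^2*(z - z^3/3)) (-1)))) {-1..1}"
    by (intro has_integral_add has_integral_diff has_integral_mult_right XX(1)[OF assms] i2 i3)
  moreover have "(\<lambda>z. (AA f D2 r z)^2 * (1-z^2) - (6*J) * ((1-z^2)*(AA f D2 r z)) + 9*J^2*(1-z^2))
     = (\<lambda>z. (AA f D2 r z - 3*J)^2 * (1-z^2))"
    by (auto simp: fun_eq_iff power2_eq_square algebra_simps)
  moreover have "XX r - (6*J) * (omega_tilde f r 1 - omega_tilde f r (-1)) + ((\<lambda>z. 9*J^2*(z - z^3/3)) 1 - (\<lambda>z. 9*J^2*(z - z^3/3)) (-1)) = XX r + 12 * J^2"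
    by (simp add: omega_tilde_def)
  ultimately show ?thesis by (simp add: omega_tilde_def)
qed

lemma claim1:
  assumes "r \<ge> m/2"
  shows "(\<integral>\<^sup>+ z \<in> {-1..1}. ennreal ((deriv (\<lambda>y. omega f J c r y) z)^2 / (1 - z^2)) \<partial>lborel)
          = (\<integral>\<^sup>+ z \<in> {-1..1}. ennreal ((deriv (\<lambda>y. omega_tilde f r y) z)^2 / (1 - z^2)) \<partial>lborel)
            + ennreal (12 * J^2)"
proof -
  have nn: "-1 \<le> z \<Longrightarrow> z \<le> 1 \<Longrightarrow> 0 \<le> 1 - z^2" for z::real
    by (auto simp: abs_square_le_1)
  have "(\<integral>\<^sup>+ z \<in> {-1..1}. ennreal ((deriv (\<lambda>y. omega f J c r y) z)^2 / (1 - z^2)) \<partial>lborel)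
      = (\<integral>\<^sup>+ z \<in> {-1..1}. ennreal ((AA f D2 r z - 3*J)^2 * (1-z^2)) \<partial>lborel)"
    by (intro nn_integral_cong) (auto simp: ic1[OF assms] indicator_def)
  also have "\<dots> = ennreal (XX r + 12 * J^2)"
    by (intro nn_integral_has_integral_lebesgue' hi1[OF assms]) (auto intro!: mult_nonneg_nonneg nn)
  also have "\<dots> = ennreal (XX r) + ennreal (12 * J^2)"
    using XX(2)[OF assms] by simp
  also have "ennreal (XX r) = (\<integral>\<^sup>+ z \<in> {-1..1}. ennreal ((AA f D2 r z)^2 * (1-z^2)) \<partial>lborel)"
    by (intro nn_integral_has_integral_lebesgue'[symmetric] XX(1)[OF assms]) (auto intro!: mult_nonneg_nonneg nn)
  also have "\<dots> = (\<integral>\<^sup>+ z \<in> {-1..1}. ennreal ((deriv (\<lambda>y. omega_tilde f r y) z)^2 / (1 - z^2)) \<partial>lborel)"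
    by (intro nn_integral_cong) (auto simp: ic1[OF assms] indicator_def)
  finally show ?thesis .
qed

lemma ipj:
  assumes "r > m/2" "z \<in> {-1..1}"
  shows "((K_phitheta f J c r (arccos z))^2 + r^2*(K_phir f J c r (arccos z))^2)/(1-z^2)
     = (D1 (r,z))^2*(1-z^2)^2 + (AA f D2 r z - 3*J)^2*(1-z^2)*(1/r^2)"
proof -
  have z: "-1 \<le> z" "z \<le> 1" using assms by auto
  have rp: "r > 0" using assms mpos by (smt (verit) divide_pos_pos)
  have cz: "cos (arccos z) = z" using z by (rule cos_arccos)
  have sz: "sin (arccos z) = sqrt (1-z^2)" using z by (rule sin_arccos)
  have "((\<lambda>s. omega f J c s z) has_real_derivative D1 (r,z)*(1-z^2)^2) (at r)"
    unfolding omega_def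
    apply (rule derivative_eq_intros pr[OF assms] refl)+
    apply simp
    done
  then have dr: "deriv (\<lambda>s. omega f J c s z) r = D1 (r,z)*(1-z^2)^2"
    by (rule DERIV_imp_deriv)
  consider "z = -1" | "z = 1" | "-1 < z \<and> z < 1" using z by force
  then show ?thesis
  proof cases
    case 3
    then have "z^2 < 1" by (simp add: abs_square_less_1 abs_less_iff)
    then have qp: "sqrt (1-z^2) > 0" by simp
    define q where "q = sqrt (1-z^2)"
    have u: "1 - z^2 = q^2" unfolding q_def using \<open>z^2<1\<close> by simp
    have "((\<lambda>t. omega f J c r (cos t)) has_real_derivative
            ((1-z^2)*(AA f D2 r z - 3*J)) * (- sin (arccos z))) (at (arccos z))"
      by (rule DERIV_chain2[where f="\<lambda>y. omega f J c r y"]) (use derivs(3)[OF _ conjunct1[OF 3] conjunct2[OF 3]] assms(1) cz in \<open>auto intro!: derivative_eq_intros\<close>)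
    then have dt: "deriv (\<lambda>t. omega f J c r (cos t)) (arccos z) = (1-z^2)*(AA f D2 r z - 3*J) * (- q)"
      unfolding sz q_def by (rule DERIV_imp_deriv)
    have alg: "((d*(q^2)^2/q)^2 + r^2*(-((q^2)*B*(-q))/(r^2*q))^2)/(q^2) = d^2*(q^2)^2 + B^2*(q^2)*(1/r^2)" for d B
      using qp rp unfolding q_def[symmetric] by (simp add: field_simps eval_nat_numeral)
    show ?thesis unfolding K_phitheta_def K_phir_def cz dr dt sz unfolding q_def[symmetric] unfolding u by (rule alg)
  qed (auto simp: K_phitheta_def K_phir_def sz)
qed

definition YY where "YY r = integral {-1..1} (\<lambda>z. (D1 (r,z))^2*(1-z^2)^2)"

lemma inner:
  assumes "r > m/2"
  shows "(\<integral>\<^sup>+ z \<in> {-1..1}. ennreal (((K_phitheta f J c r (arccos z))^2 + r^2*(K_phir f J c r (arccos z))^2)/(1-z^2)) \<partial>lborel)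
     = ennreal (YY r + (XX r + 12*J^2)*(1/r^2))" "YY r \<ge> 0"
proof -
  have r: "r \<ge> m/2" using assms by simp
  have nn: "-1 \<le> z \<Longrightarrow> z \<le> 1 \<Longrightarrow> 0 \<le> 1 - z^2" for z::real
    by (auto simp: abs_square_le_1)
  have "continuous_on {-1..1} (\<lambda>z. (D1 (r,z))^2*(1-z^2)^2)"
    using contz(2)[OF r] by (intro continuous_intros)
  then have i: "(\<lambda>z. (D1 (r,z))^2*(1-z^2)^2) integrable_on {-1..1}"
    by (rule integrable_continuous_interval)
  then have iY: "((\<lambda>z. (D1 (r,z))^2*(1-z^2)^2) has_integral YY r) {-1..1}"
    unfolding YY_def by (rule integrable_integral)
  show "YY r \<ge> 0" unfolding YY_def by (intro integral_nonneg[OF i]) auto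
  have "(\<integral>\<^sup>+ z \<in> {-1..1}. ennreal (((K_phitheta f J c r (arccos z))^2 + r^2*(K_phir f J c r (arccos z))^2)/(1-z^2)) \<partial>lborel)
    = (\<integral>\<^sup>+ z \<in> {-1..1}. ennreal ((D1 (r,z))^2*(1-z^2)^2 + (AA f D2 r z - 3*J)^2*(1-z^2)*(1/r^2)) \<partial>lborel)"
    by (intro nn_integral_cong) (auto simp: ipj[OF assms] indicator_def)
  also have "\<dots> = ennreal (YY r + (XX r + 12*J^2)*(1/r^2))"
    by (intro nn_integral_has_integral_lebesgue' has_integral_add iY has_integral_mult_left hi1[OF r])
       (auto intro!: add_nonneg_nonneg mult_nonneg_nonneg divide_nonneg_nonneg nn)
  finally show "(\<integral>\<^sup>+ z \<in> {-1..1}. ennreal (((K_phitheta f J c r (arccos z))^2 + r^2*(K_phir f J c r (arccos z))^2)/(1-z^2)) \<partial>lborel)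
     = ennreal (YY r + (XX r + 12*J^2)*(1/r^2))" .
qed

lemma zeroD:
  assumes f0: "\<forall>r z. r \<ge> m/2 \<and> -1 \<le> z \<and> z \<le> 1 \<longrightarrow> f r z = 0" and r: "r > m/2"
  shows "XX r = 0" "YY r = 0"
proof -
  have D1z: "D1 (r,z) = 0" if z: "z \<in> {-1..1}" for z
  proof -
    have "((\<lambda>s. f s z) has_real_derivative 0) (at r)"
      by (rule has_field_derivative_transform_within_open[of "\<lambda>s. 0" 0 r "{m/2<..}"]) (use f0 r z in auto)
    then show ?thesis using DERIV_unique[OF pr[OF r z]] by simp
  qed
  have D2z: "D2 (r,z) = 0" if z: "-1 < z" "z < 1" for z
  proof -
    have "((\<lambda>y. f r y) has_real_derivative 0) (at z)"
      by (rule has_field_derivative_transform_within_open[of "\<lambda>s. 0" 0 z "{-1<..<1}"]) (use f0 r z in auto)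
    moreover have "((\<lambda>y. f r y) has_real_derivative D2 (r,z)) (at z)"
      using pz[of r z] r z at_within_Icc_at[of "-1" z 1] by auto
    ultimately show ?thesis using DERIV_unique by blast
  qed
  have e: "(AA f D2 r z)^2 * (1-z^2) = 0" if z: "z \<in> {-1..1}" for z
  proof -
    from z consider "z = -1" | "z = 1" | "-1 < z \<and> z < 1" by force
    then show ?thesis
      by cases (use D2z f0 r in \<open>auto simp: AA_def\<close>)
  qed
  have "((\<lambda>z. (AA f D2 r z)^2 * (1-z^2)) has_integral 0) {-1..1}"
    by (rule has_integral_eq[where f="\<lambda>z. 0"]) (auto simp: e)
  then show "XX r = 0" using XX(1)[of r] r by (meson has_integral_unique less_imp_le)
  have "((\<lambda>z. (D1 (r,z))^2*(1-z^2)^2) has_integral 0) {-1..1}"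
    by (rule has_integral_eq[where f="\<lambda>z. 0"]) (auto simp: D1z)
  then show "YY r = 0" unfolding YY_def by (rule integral_unique)
qed

lemma move_interior:
  assumes "r0 \<ge> m/2" "-1 \<le> z0" "z0 \<le> 1" "f r0 z0 \<noteq> 0"
  shows "\<exists>r1 z1. r1 > m/2 \<and> -1 < z1 \<and> z1 < 1 \<and> f r1 z1 \<noteq> 0"
proof -
  have "(r0,z0) \<in> {m/2..} \<times> {-1..1}" using assms by auto
  moreover have "\<bar>f r0 z0\<bar> > 0" using assms(4) by simp
  moreover note cf[unfolded continuous_on_iff]
  ultimately obtain d where d: "d > 0"
    "\<forall>p\<in>{m/2..} \<times> {-1..1}. dist p (r0,z0) < d \<longrightarrow> dist ((\<lambda>(r,z). f r z) p) ((\<lambda>(r,z). f r z) (r0,z0)) < \<bar>f r0 z0\<bar>"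
    by blast
  define t where "t = min (1/2) (d/3)"
  have t: "t > 0" "t \<le> 1/2" "t \<le> d/3" using d unfolding t_def by auto
  define r1 where "r1 = r0 + t"
  define z1 where "z1 = z0 * (1 - t)"
  have "\<bar>z1\<bar> = \<bar>z0\<bar> * (1 - t)" unfolding z1_def using t by (simp add: abs_mult)
  also have "\<dots> \<le> 1 - t" using assms t by (intro mult_left_le_one_le) auto
  finally have az: "\<bar>z1\<bar> \<le> 1 - t" .
  have zz: "-1 < z1" "z1 < 1" using az t by auto
  have r1: "r1 > m/2" using assms t unfolding r1_def by simp
  have "dist (r1,z1) (r0,z0) = sqrt ((dist r1 r0)^2 + (dist z1 z0)^2)" by (simp add: dist_Pair_Pair)
  also have "\<dots> \<le> \<bar>dist r1 r0\<bar> + \<bar>dist z1 z0\<bar>" by (rule sqrt_sum_squares_le_sum_abs)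
  also have "\<dots> \<le> t + t"
  proof -
    have "dist r1 r0 = t" using t unfolding r1_def dist_real_def by simp
    moreover have "dist z1 z0 = \<bar>z0\<bar> * t" using t unfolding z1_def dist_real_def by (simp add: algebra_simps abs_mult)
    moreover have "\<bar>z0\<bar> * t \<le> t" using assms t by (simp add: mult_le_cancel_right1 abs_le_iff)
    ultimately show ?thesis using t by simp
  qed
  also have "\<dots> < d" using t d by simp
  finally have "dist (r1,z1) (r0,z0) < d" .
  then have "\<bar>f r1 z1 - f r0 z0\<bar> < \<bar>f r0 z0\<bar>" using d(2)[rule_format, of "(r1,z1)"] r1 zz by (auto simp: dist_real_def)
  then have "f r1 z1 \<noteq> 0" by auto
  then show ?thesis using r1 zz by blast
qed

lemma nonzero:
  assumes r1: "r1 > m/2" and z1: "-1 < z1" "z1 < 1" and fz: "f r1 z1 \<noteq> 0"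
  shows "\<exists>z2. -1 < z2 \<and> z2 < 1 \<and> AA f D2 r1 z2 \<noteq> 0"
proof (rule ccontr)
  assume "\<not> ?thesis"
  then have A0: "\<And>z. -1 < z \<Longrightarrow> z < 1 \<Longrightarrow> AA f D2 r1 z = 0" by blast
  have r1': "r1 \<ge> m/2" using r1 by simp
  have "((\<lambda>z. (1-z^2)*AA f D2 r1 z) has_integral (omega_tilde f r1 z1 - omega_tilde f r1 (-1))) {-1..z1}"
  proof (rule fundamental_theorem_of_calculus)
    show "-1 \<le> z1" using z1 by simp
    fix x assume x: "x \<in> {-1..z1}"
    then have "x \<in> {-1..1}" using z1 by auto
    from dtw(2)[OF r1' this] have "((\<lambda>y. omega_tilde f r1 y) has_vector_derivative (1-x^2)*(AA f D2 r1 x)) (at x within {-1..1})"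
      by (simp add: has_real_derivative_iff_has_vector_derivative)
    then show "(omega_tilde f r1 has_vector_derivative (1-x^2)*(AA f D2 r1 x)) (at x within {-1..z1})"
      by (rule has_vector_derivative_within_subset) (use z1 in auto)
  qed
  moreover have "((\<lambda>z. (1-z^2)*AA f D2 r1 z) has_integral 0) {-1..z1}"
  proof -
    have e: "x \<in> {-1..z1} \<Longrightarrow> (1-x^2)*AA f D2 r1 x = 0" for x
    proof -
      assume x: "x \<in> {-1..z1}"
      show ?thesis
      proof (cases "x = -1")
        case False
        then have "-1 < x" "x < 1" using x z1 by auto
        then show ?thesis using A0 by simp
      qed simp
    qed
    have "((\<lambda>z. (1-z^2)*AA f D2 r1 z) has_integral 0) {-1..z1} \<longleftrightarrow> ((\<lambda>z. 0::real) has_integral 0) {-1..z1}"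
      by (rule has_integral_cong) (rule e)
    then show ?thesis by simp
  qed
  ultimately have "omega_tilde f r1 z1 - omega_tilde f r1 (-1) = 0" by (rule has_integral_unique)
  then have "f r1 z1 * (1 - z1^2)^2 = 0" by (simp add: omega_tilde_def)
  moreover have "z1^2 < 1" using z1 by (simp add: abs_square_less_1 abs_less_iff)
  ultimately show False using fz by simp
qed

lemma XXpos:
  assumes r1: "r1 > m/2" and z2: "-1 < z2" "z2 < 1" and A: "AA f D2 r1 z2 \<noteq> 0"
  shows "\<exists>\<delta> \<epsilon>. \<delta> > 0 \<and> \<epsilon> > 0 \<and> r1 - \<delta> > m/2 \<and> (\<forall>r. r1 - \<delta> \<le> r \<and> r \<le> r1 + \<delta> \<longrightarrow> \<epsilon> \<le> XX r)"
proof -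
  let ?S = "{m/2..} \<times> {-1..1::real}"
  define Ag where "Ag p = D2 p * (1 - (snd p)^2) - 4 * snd p * f (fst p) (snd p)" for p
  have cf': "continuous_on ?S (\<lambda>p. f (fst p) (snd p))" using cf by (simp add: split_def)
  have cA: "continuous_on ?S Ag" unfolding Ag_def using c2 cf' by (intro continuous_intros) auto
  have AgA: "Ag (r,z) = AA f D2 r z" for r z unfolding Ag_def AA_def by simp
  define a where "a = \<bar>AA f D2 r1 z2\<bar> / 2"
  have a: "a > 0" using A unfolding a_def by simp
  have "(r1,z2) \<in> ?S" using r1 z2 by auto
  moreover note cA[unfolded continuous_on_iff]
  ultimately obtain d where d: "d > 0" "\<forall>p\<in>?S. dist p (r1,z2) < d \<longrightarrow> dist (Ag p) (Ag (r1,z2)) < a"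
    using a by blast
  define \<delta> where "\<delta> = min (min (d/3) ((r1 - m/2)/2)) ((1 - \<bar>z2\<bar>)/2)"
  have dl: "\<delta> > 0" "\<delta> \<le> d/3" "\<delta> \<le> (r1 - m/2)/2" "\<delta> \<le> (1 - \<bar>z2\<bar>)/2"
    using d r1 z2 unfolding \<delta>_def by (auto simp: min_def)
  define \<beta> where "\<beta> = 1 - (\<bar>z2\<bar> + \<delta>)^2"
  have zd: "\<bar>z2\<bar> + \<delta> < 1" using dl z2 by auto
  have "(\<bar>z2\<bar> + \<delta>)^2 < 1" using zd dl by (simp add: abs_square_less_1)
  then have b: "\<beta> > 0" unfolding \<beta>_def by simp
  have key: "a^2 * \<beta> \<le> (AA f D2 r z)^2 * (1 - z^2)"
    if r: "r1 - \<delta> \<le> r" "r \<le> r1 + \<delta>" and z: "z2 - \<delta> \<le> z" "z \<le> z2 + \<delta>" for r z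
  proof -
    have az: "\<bar>z\<bar> \<le> \<bar>z2\<bar> + \<delta>" using z by auto
    have inS: "(r,z) \<in> ?S" using r z dl zd az by auto
    have "dist (r,z) (r1,z2) = sqrt ((dist r r1)^2 + (dist z z2)^2)" by (simp add: dist_Pair_Pair)
    also have "\<dots> \<le> \<bar>dist r r1\<bar> + \<bar>dist z z2\<bar>" by (rule sqrt_sum_squares_le_sum_abs)
    also have "\<dots> \<le> \<delta> + \<delta>" using r z by (auto simp: dist_real_def)
    also have "\<dots> < d" using dl d by simp
    finally have "dist (Ag (r,z)) (Ag (r1,z2)) < a" using d(2) inS by blast
    then have "\<bar>AA f D2 r z - AA f D2 r1 z2\<bar> < a" by (simp add: AgA dist_real_def)
    then have "a \<le> \<bar>AA f D2 r z\<bar>" unfolding a_def by linarith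
    then have 1: "a^2 \<le> (AA f D2 r z)^2" using a by (metis abs_of_pos power2_abs power_mono less_imp_le)
    have "z^2 \<le> (\<bar>z2\<bar> + \<delta>)^2" using az by (metis abs_ge_zero power2_abs power_mono)
    then have 2: "\<beta> \<le> 1 - z^2" unfolding \<beta>_def by simp
    show ?thesis using mult_mono[OF 1 2] b by simp
  qed
  define \<epsilon> where "\<epsilon> = (2*\<delta>) * (a^2 * \<beta>)"
  have "\<epsilon> \<le> XX r" if r: "r1 - \<delta> \<le> r" "r \<le> r1 + \<delta>" for r
  proof -
    have rr: "r \<ge> m/2" using r dl by simp
    have sub: "{z2 - \<delta>..z2 + \<delta>} \<subseteq> {-1..1}" using dl zd by auto
    have iX: "(\<lambda>z. (AA f D2 r z)^2 * (1-z^2)) integrable_on {-1..1}" using XX(1)[OF rr] by blast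
    have iS: "(\<lambda>z. (AA f D2 r z)^2 * (1-z^2)) integrable_on {z2 - \<delta>..z2 + \<delta>}"
      by (rule integrable_on_subinterval[OF iX sub])
    have "\<epsilon> = integral {z2 - \<delta>..z2 + \<delta>} (\<lambda>z. a^2 * \<beta>)" unfolding \<epsilon>_def using dl by simp
    also have "\<dots> \<le> integral {z2 - \<delta>..z2 + \<delta>} (\<lambda>z. (AA f D2 r z)^2 * (1-z^2))"
      by (rule integral_le[OF _ iS]) (use key r in auto)
    also have "\<dots> \<le> integral {-1..1} (\<lambda>z. (AA f D2 r z)^2 * (1-z^2))"
      by (rule integral_subset_le[OF sub iS iX]) (auto simp: abs_square_le_1)
    finally show ?thesis unfolding XX_def .
  qed
  moreover have "\<epsilon> > 0" unfolding \<epsilon>_def using dl a b by simp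
  moreover have "r1 - \<delta> > m/2" using dl r1 by simp
  ultimately show ?thesis using dl by blast
qed

end


lemma rho_pos: assumes "r > m/2" "m > 0" shows "rho m r > 0"
proof -
  have "r > 0" using assms by simp
  then show ?thesis using assms by (simp add: rho_eq)
qed

theorem mainTheorem5:
  fixes m J c :: real and f :: "real \<Rightarrow> real \<Rightarrow> real"
  assumes "m > 0"
    and "smooth_on2 ({m/2..} \<times> {-1..1}) (\<lambda>(r, z). f r z)"
  shows "(\<forall>r \<ge> m/2.
            (\<integral>\<^sup>+ z \<in> {-1..1}. ennreal ((deriv (\<lambda>y. omega f J c r y) z)^2 / (1 - z^2)) \<partial>lborel)
          = (\<integral>\<^sup>+ z \<in> {-1..1}. ennreal ((deriv (\<lambda>y. omega_tilde f r y) z)^2 / (1 - z^2)) \<partial>lborel)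
            + ennreal (12 * J^2))
       \<and> PJ m f J c \<ge> ennreal (J^2 / (4 * m^2))
       \<and> (PJ m f J c = ennreal (J^2 / (4 * m^2)) \<longleftrightarrow>
            (\<forall>r z. r \<ge> m/2 \<and> -1 \<le> z \<and> z \<le> 1 \<longrightarrow> f r z = 0))"
proof -
  let ?S = "{m/2..} \<times> {-1..1::real}"
  have sm: "Ck_on2 k ?S (\<lambda>(r, z). f r z)" for k using assms(2) unfolding smooth_on2_def by blast
  have cf: "continuous_on ?S (\<lambda>(r, z). f r z)" using sm[of 0] by simp
  from sm[of "Suc 0"] obtain D1 D2 where
    der: "\<forall>x\<in>?S. ((\<lambda>(r,z). f r z) has_derivative (\<lambda>h. fst h * D1 x + snd h * D2 x)) (at x within ?S)"
    and c1: "continuous_on ?S D1" and c2: "continuous_on ?S D2" by auto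
  interpret L: pjctx m f D1 D2 using assms(1) cf der c1 c2 by unfold_locales
  have mp: "m > 0" by (rule assms(1))
  have part1: "\<forall>r \<ge> m/2.
            (\<integral>\<^sup>+ z \<in> {-1..1}. ennreal ((deriv (\<lambda>y. omega f J c r y) z)^2 / (1 - z^2)) \<partial>lborel)
          = (\<integral>\<^sup>+ z \<in> {-1..1}. ennreal ((deriv (\<lambda>y. omega_tilde f r y) z)^2 / (1 - z^2)) \<partial>lborel)
            + ennreal (12 * J^2)" using L.claim1 by blast
  define inner where "inner r = (\<integral>\<^sup>+ z \<in> {-1..1}. ennreal (((K_phitheta f J c r (arccos z))^2 + r^2*(K_phir f J c r (arccos z))^2)/(1-z^2)) \<partial>lborel)" for r
  define G where "G r = 24*J^2*rho m r / r" for r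
  define H where "H r = 2*rho m r*r*(L.YY r + L.XX r*(1/r^2))" for r
  have rho0: "rho m (m/2) = 0" using mp by (simp add: rho_def)
  have Gnn: "G r \<ge> 0" if "r \<ge> m/2" for r
  proof -
    have "r > 0" using that mp by simp
    then show ?thesis unfolding G_def using rho_nonneg[OF that mp] by simp
  qed
  have Hnn: "H r \<ge> 0" if "r \<ge> m/2" for r
  proof (cases "r = m/2")
    case True then show ?thesis unfolding H_def True rho0 by simp
  next
    case False
    then have r: "r > m/2" "r > 0" using that mp by auto
    then show ?thesis unfolding H_def using rho_nonneg[OF that mp] L.XX(2)[OF that] L.inner(2)[OF r(1)]
      by (auto intro!: mult_nonneg_nonneg add_nonneg_nonneg)
  qed
  have PJ_eq: "PJ m f J c = (\<integral>\<^sup>+ r. ennreal (G r + H r) * indicator {m/2..} r \<partial>lborel)"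
  proof -
    have "PJ m f J c = (\<integral>\<^sup>+ r. ennreal (2 * rho m r * r) * inner r * indicator {m/2..} r \<partial>lborel)"
      unfolding PJ_def inner_def by simp
    also have "\<dots> = (\<integral>\<^sup>+ r. ennreal (G r + H r) * indicator {m/2..} r \<partial>lborel)"
    proof (intro nn_integral_cong)
      fix r :: real
      consider "r < m/2" | "r = m/2" | "r > m/2" by force
      then show "ennreal (2 * rho m r * r) * inner r * indicator {m/2..} r = ennreal (G r + H r) * indicator {m/2..} r"
      proof cases
        case 2 then show ?thesis unfolding G_def H_def 2 rho0 by simp
      next
        case 3
        then have rp: "r > 0" "r \<ge> m/2" using mp by auto
        have "ennreal (2 * rho m r * r) * inner r = ennreal (2 * rho m r * r * (L.YY r + (L.XX r + 12*J^2)*(1/r^2)))"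
          unfolding inner_def L.inner(1)[OF 3] using rho_nonneg[OF rp(2) mp] rp L.XX(2)[OF rp(2)] L.inner(2)[OF 3]
          by (subst ennreal_mult) auto
        also have "2 * rho m r * r * (L.YY r + (L.XX r + 12*J^2)*(1/r^2)) = G r + H r"
          unfolding G_def H_def using rp by (simp add: field_simps power2_eq_square)
        finally show ?thesis by simp
      qed simp
    qed
    finally show ?thesis .
  qed
  have ftcG: "(\<integral>\<^sup>+ r. ennreal (G r) * indicator {m/2..} r \<partial>lborel) = ennreal (J^2/(4*m^2))"
    unfolding G_def by (rule ftc[OF mp])
  have part2: "PJ m f J c \<ge> ennreal (J^2 / (4 * m^2))"
  proof -
    have "(\<integral>\<^sup>+ r. ennreal (G r) * indicator {m/2..} r \<partial>lborel) \<le> (\<integral>\<^sup>+ r. ennreal (G r + H r) * indicator {m/2..} r \<partial>lborel)"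
      by (intro nn_integral_mono) (auto simp: indicator_def intro!: ennreal_leI Hnn)
    then show ?thesis using PJ_eq ftcG by simp
  qed
  have part3: "PJ m f J c = ennreal (J^2 / (4 * m^2)) \<longleftrightarrow>
            (\<forall>r z. r \<ge> m/2 \<and> -1 \<le> z \<and> z \<le> 1 \<longrightarrow> f r z = 0)"
  proof
    assume f0: "\<forall>r z. r \<ge> m/2 \<and> -1 \<le> z \<and> z \<le> 1 \<longrightarrow> f r z = 0"
    have "H r = 0" if "r \<ge> m/2" for r
    proof (cases "r = m/2")
      case True then show ?thesis unfolding H_def True rho0 by simp
    next
      case False
      then have "r > m/2" using that by simp
      then show ?thesis unfolding H_def using L.zeroD[OF f0] by simp
    qed
    then have "(\<integral>\<^sup>+ r. ennreal (G r + H r) * indicator {m/2..} r \<partial>lborel) = (\<integral>\<^sup>+ r. ennreal (G r) * indicator {m/2..} r \<partial>lborel)"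
      by (intro nn_integral_cong) (auto simp: indicator_def)
    then show "PJ m f J c = ennreal (J^2 / (4 * m^2))" using PJ_eq ftcG by simp
  next
    assume eq: "PJ m f J c = ennreal (J^2 / (4 * m^2))"
    show "\<forall>r z. r \<ge> m/2 \<and> -1 \<le> z \<and> z \<le> 1 \<longrightarrow> f r z = 0"
    proof (rule ccontr)
      assume "\<not> ?thesis"
      then obtain r0 z0 where "r0 \<ge> m/2" "-1 \<le> z0" "z0 \<le> 1" "f r0 z0 \<noteq> 0" by blast
      then obtain r1 z1 where r1: "r1 > m/2" "-1 < z1" "z1 < 1" "f r1 z1 \<noteq> 0"
        using L.move_interior by blast
      then obtain z2 where z2: "-1 < z2" "z2 < 1" "AA f D2 r1 z2 \<noteq> 0"
        using L.nonzero by blast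
      then obtain \<delta> \<epsilon> where de: "\<delta> > 0" "\<epsilon> > 0" "r1 - \<delta> > m/2" "\<forall>r. r1 - \<delta> \<le> r \<and> r \<le> r1 + \<delta> \<longrightarrow> \<epsilon> \<le> L.XX r"
        using L.XXpos[OF r1(1)] by blast
      define K where "K r = 2*rho m r*r*(\<epsilon>*(1/r^2)) * indicator {r1-\<delta>..r1+\<delta>} r" for r
      have Knn: "K r \<ge> 0" if "r \<ge> m/2" for r
        unfolding K_def using rho_nonneg[OF that mp] that mp de(2)
        by (auto intro!: mult_nonneg_nonneg simp: indicator_def)
      have KH: "K r \<le> H r" if "r \<ge> m/2" for r
      proof (cases "r \<in> {r1-\<delta>..r1+\<delta>}")
        case True
        then have rr: "r > m/2" "r > 0" using de mp by auto
        have "\<epsilon> \<le> L.XX r" using de(4) True by auto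
        then have "\<epsilon>*(1/r^2) \<le> L.XX r*(1/r^2)" by (rule mult_right_mono) simp
        then have "\<epsilon>*(1/r^2) \<le> L.YY r + L.XX r*(1/r^2)"
          using L.inner(2)[OF rr(1)] by linarith
        then have "2*rho m r*r*(\<epsilon>*(1/r^2)) \<le> 2*rho m r*r*(L.YY r + L.XX r*(1/r^2))"
          using rho_nonneg[OF that mp] rr by (intro mult_left_mono) auto
        then show ?thesis using True unfolding K_def H_def by simp
      next
        case False then show ?thesis unfolding K_def using Hnn[OF that] by simp
      qed
      have mG: "G \<in> borel_measurable borel" unfolding G_def rho_def by measurable
      have mK: "K \<in> borel_measurable borel" unfolding K_def rho_def by measurable
      have mG': "(\<lambda>r. ennreal (G r) * indicator {m/2..} r) \<in> borel_measurable lborel" using mG by measurable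
      have mK': "(\<lambda>r. ennreal (K r) * indicator {m/2..} r) \<in> borel_measurable lborel" using mK by measurable
      define Q where "Q = (\<integral>\<^sup>+ r. ennreal (K r) * indicator {m/2..} r \<partial>lborel)"
      have "(\<integral>\<^sup>+ r. ennreal (G r) * indicator {m/2..} r + ennreal (K r) * indicator {m/2..} r \<partial>lborel)
           \<le> (\<integral>\<^sup>+ r. ennreal (G r + H r) * indicator {m/2..} r \<partial>lborel)"
      proof (intro nn_integral_mono)
        fix r :: real
        show "ennreal (G r) * indicator {m/2..} r + ennreal (K r) * indicator {m/2..} r \<le> ennreal (G r + H r) * indicator {m/2..} r"
        proof (cases "r \<ge> m/2")
          case True
          then have "ennreal (G r) + ennreal (K r) = ennreal (G r + K r)" using Gnn Knn by simp
          also have "\<dots> \<le> ennreal (G r + H r)" using KH[OF True] by (intro ennreal_leI) simp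
          finally show ?thesis using True by (simp add: indicator_def)
        qed (simp add: indicator_def)
      qed
      moreover have "(\<integral>\<^sup>+ r. ennreal (G r) * indicator {m/2..} r + ennreal (K r) * indicator {m/2..} r \<partial>lborel)
          = (\<integral>\<^sup>+ r. ennreal (G r) * indicator {m/2..} r \<partial>lborel) + Q"
        unfolding Q_def by (rule nn_integral_add[OF mG' mK'])
      ultimately have "ennreal (J^2/(4*m^2)) + Q \<le> ennreal (J^2/(4*m^2)) + 0"
        using PJ_eq ftcG eq by simp
      then have Q0: "Q = 0" by (simp add: ennreal_add_left_cancel_le)
      have "AE r in lborel. ennreal (K r) * indicator {m/2..} r = 0"
        using Q0 unfolding Q_def nn_integral_0_iff_AE[OF mK'] .
      then obtain N where N: "{r \<in> space lborel. \<not> ennreal (K r) * indicator {m/2..} r = 0} \<subseteq> N"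
        "emeasure lborel N = 0" "N \<in> sets lborel" by (rule AE_E)
      have "{r1-\<delta>..r1+\<delta>} \<subseteq> N"
      proof
        fix r assume r: "r \<in> {r1-\<delta>..r1+\<delta>}"
        then have rr: "r > m/2" "r > 0" using de mp by auto
        have "K r > 0" unfolding K_def using r rr rho_pos[OF rr(1) mp] de(2) by simp
        then show "r \<in> N" using N(1) rr by (auto simp: indicator_def)
      qed
      then have "emeasure lborel {r1-\<delta>..r1+\<delta>} \<le> emeasure lborel N" using N(3) by (rule emeasure_mono)
      then show False using N(2) de(1) by simp
    qed
  qed
  show ?thesis using part1 part2 part3 by blast
qed

end
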